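(* Let $\varepsilon>0$, let $\widetilde M_f,\widetilde M_g$ be as in the context, and let $\varphi:\widetilde M_f\to\widetilde M_g$ be the continuous map $\varphi=\phi_1\cup\cdots\cup\phi_{\eta_f}$ obtained from a leaf assignment whose path extensions agree pairwise at least common ancestors of leaves. Suppose that for every leaf node $w$ of $\widetilde M_g$ with $w\notin\mathrm{Im}(\varphi)$, the nearest ancestor $w^a$ of $w$ lying in $\mathrm{Im}(\varphi)$ satisfies $|\tilde g(w^a)-\tilde g(w)|\le2\varepsilon$. Then for every point $x\in\widetilde M_g\setminus\mathrm{Im}(\varphi)$, the nearest ancestor $x^a$ of $x$ lying in $\mathrm{Im}(\varphi)$ satisfies $|\tilde g(x^a)-\tilde g(x)|\le 2\varepsilon$.
   Context: A finite merge tree is a finite rooted tree regarded as a topological space, with a continuous height function strictly increasing along each edge toward the root. Let $M_f$ (height $\tilde f$, root $r_f$) and $M_g$ (height $\tilde g$, root $r_g$) be finite merge trees with $\tilde g(r_g)=\tilde f(r_f)+\varepsilon$. Let $H=\{\tilde f(u): u \text{ a node of } M_f\}\cup\{\tilde g(w)-\varepsilon: w\text{ a node of } M_g\}$. $\widetilde M_f$ is obtained from $M_f$ by inserting a degree-two node at every point $x$ with $\tilde f(x)\in H$ not already a node; $\widetilde M_g$ from $M_g$ by inserting degree-two nodes at all points with $\tilde g$-value in $H+\varepsilon$ not already nodes. Let $u_1,\dots,u_{\eta_f}$ be the leaves of $\widetilde M_f$, and $\phi$ assign to each $u_i$ a node $\phi(u_i)$ of $\widetilde M_g$ with $\tilde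 g(\phi(u_i))=\tilde f(u_i)+\varepsilon$. With $P_i$ the path from $u_i$ to the root of $\widetilde M_f$ and $P_i'$ that from $\phi(u_i)$ to the root of $\widetilde M_g$, $\phi_i:P_i\to P_i'$ sends $x$ to the unique point of $P_i'$ with $\tilde g$-value $\tilde f(x)+\varepsilon$; it is assumed $\phi_i(v)=\phi_j(v)$ for $v=\mathrm{LCA}(u_i,u_j)$ (lowest common ancestor) for all $i\ne j$, so $\varphi(x)=\phi_i(x)$ for $x\in P_i$ is well-defined. An ancestor of a point $x$ is a point on the upward path from $x$ to the root; the root of $\widetilde M_g$ lies in $\mathrm{Im}(\varphi)$, so nearest ancestors in the image exist. *)

theory Defs
  imports Complex_Main
begin

record 'v mtree =
  mt_V :: "'v set"
  mt_par :: "'v \<Rightarrow> 'v"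
  mt_root :: 'v
  mt_h :: "'v \<Rightarrow> real"

definition mt_edges :: "'v mtree \<Rightarrow> ('v \<times> 'v) set" where
  "mt_edges T = {(v, mt_par T v) | v. v \<in> mt_V T - {mt_root T}}"

definition merge_tree :: "'v mtree \<Rightarrow> bool" where
  "merge_tree T \<longleftrightarrow> finite (mt_V T) \<and> mt_root T \<in> mt_V T \<and>
     (\<forall>v \<in> mt_V T - {mt_root T}. mt_par T v \<in> mt_V T \<and> mt_h T v < mt_h T (mt_par T v)) \<and>
     (\<forall>v \<in> mt_V T. (v, mt_root T) \<in> (mt_edges T)\<^sup>*)"

text \<open>Points of the underlying topological space: a point is a pair (v, t) lying on the
edge from node v to its parent at height t (with h v \<le> t < h (par v)), or the root
point (root, h root).  The node v itself is the point (v, h v).  The height function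
on points is snd.\<close>

definition mt_points :: "'v mtree \<Rightarrow> ('v \<times> real) set" where
  "mt_points T = {(v, t). v \<in> mt_V T - {mt_root T} \<and> mt_h T v \<le> t \<and> t < mt_h T (mt_par T v)}
                 \<union> {(mt_root T, mt_h T (mt_root T))}"

definition mt_node_points :: "'v mtree \<Rightarrow> ('v \<times> real) set" where
  "mt_node_points T = (\<lambda>v. (v, mt_h T v)) ` mt_V T"

definition mt_anc :: "'v mtree \<Rightarrow> ('v \<times> real) \<Rightarrow> ('v \<times> real) \<Rightarrow> bool" where
  "mt_anc T x y \<longleftrightarrow> x \<in> mt_points T \<and> y \<in> mt_points T \<and>
     (fst x, fst y) \<in> (mt_edges T)\<^sup>* \<and> snd x \<le> snd y"

text \<open>Leaves: points with no other point below them (these are the leaf nodes of the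
tree and of any subdivision of it by degree-two nodes).\<close>
definition mt_leaves :: "'v mtree \<Rightarrow> ('v \<times> real) set" where
  "mt_leaves T = {x \<in> mt_points T. \<forall>y. mt_anc T y x \<longrightarrow> y = x}"

definition mt_lca :: "'v mtree \<Rightarrow> ('v \<times> real) \<Rightarrow> ('v \<times> real) \<Rightarrow> ('v \<times> real)" where
  "mt_lca T x y = (THE z. mt_anc T x z \<and> mt_anc T y z \<and>
                      (\<forall>z'. mt_anc T x z' \<and> mt_anc T y z' \<longrightarrow> mt_anc T z z'))"

definition nearest_anc :: "'v mtree \<Rightarrow> ('v \<times> real) set \<Rightarrow> ('v \<times> real) \<Rightarrow> ('v \<times> real)" where
  "nearest_anc T S x = (THE y. y \<in> S \<and> mt_anc T x y \<and> (\<forall>z \<in> S. mt_anc T x z \<longrightarrow> mt_anc T y z))"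

definition Hset :: "'v mtree \<Rightarrow> 'w mtree \<Rightarrow> real \<Rightarrow> real set" where
  "Hset F G \<epsilon> = mt_h F ` mt_V F \<union> (\<lambda>w. mt_h G w - \<epsilon>) ` mt_V G"

definition subdiv_nodes_g :: "'v mtree \<Rightarrow> 'w mtree \<Rightarrow> real \<Rightarrow> ('w \<times> real) set" where
  "subdiv_nodes_g F G \<epsilon> = mt_node_points G \<union>
      {x \<in> mt_points G. snd x \<in> (\<lambda>t. t + \<epsilon>) ` Hset F G \<epsilon>}"

definition path_ext :: "'w mtree \<Rightarrow> real \<Rightarrow> ('v \<times> real \<Rightarrow> 'w \<times> real) \<Rightarrow> ('v \<times> real) \<Rightarrow> ('v \<times> real) \<Rightarrow> ('w \<times> real)" where
  "path_ext G \<epsilon> \<phi> u x = (THE y. mt_anc G (\<phi> u) y \<and> snd y = snd x + \<epsilon>)"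

definition image_phi :: "'v mtree \<Rightarrow> 'w mtree \<Rightarrow> real \<Rightarrow> ('v \<times> real \<Rightarrow> 'w \<times> real) \<Rightarrow> ('w \<times> real) set" where
  "image_phi F G \<epsilon> \<phi> = (\<Union>u \<in> mt_leaves F. path_ext G \<epsilon> \<phi> u ` {x. mt_anc F u x})"

end

theory Submission imports Defs begin

lemma E_iff: "(a,b) \<in> mt_edges T \<longleftrightarrow> a \<in> mt_V T - {mt_root T} \<and> b = mt_par T a"
  by (auto simp: mt_edges_def)

lemma rt_h: assumes "merge_tree T" "(a,b) \<in> (mt_edges T)\<^sup>*" shows "mt_h T a \<le> mt_h T b"
  using assms(2)
proof (induction rule: rtrancl_induct)
  case (step y z) then show ?case using assms(1) by (force simp: E_iff merge_tree_def)
qed simp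

lemma rt_strict: assumes "merge_tree T" "(a,b) \<in> (mt_edges T)\<^sup>*" "a \<noteq> b"
  shows "a \<in> mt_V T - {mt_root T} \<and> mt_h T (mt_par T a) \<le> mt_h T b"
  using assms(2,3)
proof (cases rule: converse_rtranclE)
  case (step c) then show ?thesis using rt_h[OF assms(1)] by (auto simp: E_iff)
qed simp

lemma rt_strict_lt: assumes "merge_tree T" "(a,b) \<in> (mt_edges T)\<^sup>*" "a \<noteq> b"
  shows "mt_h T a < mt_h T b"
  using rt_strict[OF assms] assms(1) unfolding merge_tree_def by force

lemma rt_comp: assumes "(a,c) \<in> (mt_edges T)\<^sup>*" "(a,b) \<in> (mt_edges T)\<^sup>*"
  shows "(b,c) \<in> (mt_edges T)\<^sup>* \<or> (c,b) \<in> (mt_edges T)\<^sup>*"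
  using assms(1)
proof (induction rule: rtrancl_induct)
  case base then show ?case using assms(2) by simp
next
  case (step y z)
  from step.IH show ?case
  proof (elim disjE)
    assume "(b,y) \<in> (mt_edges T)\<^sup>*" then show ?thesis using step(2) by auto
  next
    assume h: "(y,b) \<in> (mt_edges T)\<^sup>*"
    show ?thesis
    proof (cases "y = b")
      case True then show ?thesis using step(2) by auto
    next
      case False
      from h False show ?thesis
      proof (cases rule: converse_rtranclE)
        case (step y') then show ?thesis using \<open>(y,z) \<in> mt_edges T\<close> by (auto simp: E_iff)
      qed simp
    qed
  qed
qed

lemma pt_cases: "x \<in> mt_points T \<Longrightarrow>
   (fst x \<in> mt_V T - {mt_root T} \<and> mt_h T (fst x) \<le> snd x \<and> snd x < mt_h T (mt_par T (fst x)))
   \<or> x = (mt_root T, mt_h T (mt_root T))"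
  by (auto simp: mt_points_def)

lemma pt_V: "merge_tree T \<Longrightarrow> x \<in> mt_points T \<Longrightarrow> fst x \<in> mt_V T"
  by (auto simp: mt_points_def merge_tree_def)

lemma pt_hle: "x \<in> mt_points T \<Longrightarrow> mt_h T (fst x) \<le> snd x"
  by (auto simp: mt_points_def)

lemma pt_root: "merge_tree T \<Longrightarrow> x \<in> mt_points T \<Longrightarrow> snd x \<le> mt_h T (mt_root T)"
proof -
  assume m: "merge_tree T" and x: "x \<in> mt_points T"
  from pt_cases[OF x] show ?thesis
  proof
    assume a: "fst x \<in> mt_V T - {mt_root T} \<and> mt_h T (fst x) \<le> snd x \<and> snd x < mt_h T (mt_par T (fst x))"
    then have "mt_par T (fst x) \<in> mt_V T" using m by (auto simp: merge_tree_def)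
    then have "(mt_par T (fst x), mt_root T) \<in> (mt_edges T)\<^sup>*" using m by (auto simp: merge_tree_def)
    then show ?thesis using rt_h[OF m] a by force
  qed simp
qed

lemma root_pt: "mt_root T \<in> mt_V T \<Longrightarrow> (mt_root T, mt_h T (mt_root T)) \<in> mt_points T"
  by (auto simp: mt_points_def)

lemma node_pt: "merge_tree T \<Longrightarrow> v \<in> mt_V T \<Longrightarrow> (v, mt_h T v) \<in> mt_points T"
  by (cases "v = mt_root T") (auto simp: mt_points_def merge_tree_def)

lemma anc_trans: "mt_anc T x y \<Longrightarrow> mt_anc T y z \<Longrightarrow> mt_anc T x z"
  by (auto simp: mt_anc_def)

lemma anc_refl: "x \<in> mt_points T \<Longrightarrow> mt_anc T x x"
  by (auto simp: mt_anc_def)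

lemma anc_antisym: assumes "merge_tree T" "mt_anc T x y" "mt_anc T y x" shows "x = y"
proof -
  have r1: "(fst x, fst y) \<in> (mt_edges T)\<^sup>*" and r2: "(fst y, fst x) \<in> (mt_edges T)\<^sup>*"
    using assms(2,3) unfolding mt_anc_def by auto
  have "fst x = fst y"
  proof (rule ccontr)
    assume ne: "fst x \<noteq> fst y"
    have "mt_h T (fst x) < mt_h T (fst y)" using rt_strict_lt[OF assms(1) r1 ne] .
    moreover have "mt_h T (fst y) \<le> mt_h T (fst x)" using rt_h[OF assms(1) r2] .
    ultimately show False by simp
  qed
  then show ?thesis using assms unfolding mt_anc_def by (simp add: prod_eq_iff)
qed

lemma anc_chain: assumes m: "merge_tree T" and p: "mt_anc T w p" and q: "mt_anc T w q"
  and le: "snd p \<le> snd q" shows "mt_anc T p q"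
proof -
  have c: "(fst p, fst q) \<in> (mt_edges T)\<^sup>* \<or> (fst q, fst p) \<in> (mt_edges T)\<^sup>*"
  proof -
    have "(fst w, fst p) \<in> (mt_edges T)\<^sup>*" "(fst w, fst q) \<in> (mt_edges T)\<^sup>*"
      using p q by (simp_all add: mt_anc_def)
    then show ?thesis using rt_comp by metis
  qed
  show ?thesis
  proof (cases "(fst p, fst q) \<in> (mt_edges T)\<^sup>*")
    case True then show ?thesis using p q le by (auto simp: mt_anc_def)
  next
    case False
    then have r: "(fst q, fst p) \<in> (mt_edges T)\<^sup>*" "fst q \<noteq> fst p" using c by auto
    from rt_strict[OF m r] have a: "fst q \<in> mt_V T - {mt_root T}" "mt_h T (mt_par T (fst q)) \<le> mt_h T (fst p)" by auto
    have qp: "q \<in> mt_points T" "p \<in> mt_points T" using p q by (auto simp: mt_anc_def)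
    from pt_cases[OF qp(1)] a have "snd q < mt_h T (mt_par T (fst q))" by auto
    with a pt_hle[OF qp(2)] le have False by linarith
    then show ?thesis ..
  qed
qed

lemma anc_exists: assumes m: "merge_tree T" and x: "x \<in> mt_points T"
  and s: "snd x \<le> s" "s \<le> mt_h T (mt_root T)"
  shows "\<exists>y. mt_anc T x y \<and> snd y = s"
proof -
  have "(fst x, mt_root T) \<in> (mt_edges T)\<^sup>*" using m pt_V[OF m x] by (auto simp: merge_tree_def)
  then have "\<forall>t. (fst x, t) \<in> mt_points T \<longrightarrow> t \<le> s \<longrightarrow> (\<exists>y. mt_anc T (fst x, t) y \<and> snd y = s)"
  proof (induction rule: converse_rtrancl_induct)
    case base
    show ?case
    proof (intro allI impI)
      fix t assume "(mt_root T, t) \<in> mt_points T" "t \<le> s"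
      then have "t = mt_h T (mt_root T)" by (auto simp: mt_points_def)
      then show "\<exists>y. mt_anc T (mt_root T, t) y \<and> snd y = s"
        using s \<open>t \<le> s\<close> \<open>(mt_root T, t) \<in> mt_points T\<close> by (intro exI[of _ "(mt_root T, t)"]) (auto simp: mt_anc_def)
    qed
  next
    case (step v v')
    show ?case
    proof (intro allI impI)
      fix t assume tp: "(v, t) \<in> mt_points T" and ts: "t \<le> s"
      have vv: "v \<in> mt_V T - {mt_root T}" "v' = mt_par T v" using step(1) by (auto simp: E_iff)
      have tlt: "t < mt_h T v'" using tp vv by (auto simp: mt_points_def)
      show "\<exists>y. mt_anc T (v, t) y \<and> snd y = s"
      proof (cases "s < mt_h T v'")
        case True
        have "(v, s) \<in> mt_points T" using tp vv True ts by (auto simp: mt_points_def)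
        then show ?thesis using tp ts by (intro exI[of _ "(v,s)"]) (auto simp: mt_anc_def)
      next
        case False
        have v'V: "v' \<in> mt_V T" using vv m by (auto simp: merge_tree_def)
        have pv: "(v', mt_h T v') \<in> mt_points T" using node_pt[OF m v'V] .
        obtain y where y: "mt_anc T (v', mt_h T v') y" "snd y = s" using step(3) pv False by force
        have "mt_anc T (v, t) (v', mt_h T v')" using tp pv tlt step(1) by (auto simp: mt_anc_def)
        then show ?thesis using y anc_trans by blast
      qed
    qed
  qed
  then show ?thesis using x s by (metis prod.collapse)
qed

lemma anc_unique: "merge_tree T \<Longrightarrow> mt_anc T x y1 \<Longrightarrow> mt_anc T x y2 \<Longrightarrow> snd y1 = snd y2 \<Longrightarrow> y1 = y2"
  using anc_chain anc_antisym by (metis order_refl)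

lemma leaf_below: assumes m: "merge_tree T" and x: "x \<in> mt_points T"
  shows "\<exists>w \<in> mt_leaves T. mt_anc T w x"
proof -
  let ?N = "{v \<in> mt_V T. (v, fst x) \<in> (mt_edges T)\<^sup>*}"
  have fin: "finite ?N" using m by (auto simp: merge_tree_def)
  have ne: "fst x \<in> ?N" using pt_V[OF m x] by auto
  have "Min (mt_h T ` ?N) \<in> mt_h T ` ?N" using Min_in[of "mt_h T ` ?N"] fin ne by blast
  then obtain v where v0: "v \<in> ?N" "mt_h T v = Min (mt_h T ` ?N)" by (metis (no_types, lifting) imageE)
  have v: "v \<in> ?N" "\<forall>v' \<in> ?N. mt_h T v \<le> mt_h T v'"
    using v0 fin by auto
  have vp: "(v, mt_h T v) \<in> mt_points T" using node_pt[OF m] v by auto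
  have anc: "mt_anc T (v, mt_h T v) x"
    using vp x v rt_h[OF m, of v "fst x"] pt_hle[OF x] by (auto simp: mt_anc_def)
  have "(v, mt_h T v) \<in> mt_leaves T"
    unfolding mt_leaves_def
  proof (intro CollectI conjI allI impI vp)
    fix y assume y: "mt_anc T y (v, mt_h T v)"
    have yp: "y \<in> mt_points T" using y by (auto simp: mt_anc_def)
    have r: "(fst y, v) \<in> (mt_edges T)\<^sup>*" using y by (auto simp: mt_anc_def)
    have "fst y \<in> ?N" using pt_V[OF m yp] r v(1) by auto
    then have "mt_h T v \<le> mt_h T (fst y)" using v by auto
    moreover have "mt_h T (fst y) \<le> snd y" "snd y \<le> mt_h T v" using pt_hle[OF yp] y by (auto simp: mt_anc_def)
    ultimately have "fst y = v" using rt_strict_lt[OF m r] by force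
    then show "y = (v, mt_h T v)" using \<open>mt_h T (fst y) \<le> snd y\<close> \<open>snd y \<le> mt_h T v\<close> by (simp add: prod_eq_iff)
  qed
  then show ?thesis using anc by blast
qed

lemma leaves_sub: "merge_tree T \<Longrightarrow> mt_leaves T \<subseteq> (\<lambda>v. (v, mt_h T v)) ` mt_V T"
proof
  fix x assume m: "merge_tree T" and x: "x \<in> mt_leaves T"
  have xp: "x \<in> mt_points T" using x by (auto simp: mt_leaves_def)
  have "(fst x, mt_h T (fst x)) \<in> mt_points T" using node_pt[OF m pt_V[OF m xp]] .
  then have "mt_anc T (fst x, mt_h T (fst x)) x" using xp pt_hle[OF xp] by (auto simp: mt_anc_def)
  moreover have "\<forall>y. mt_anc T y x \<longrightarrow> y = x" using x by (simp add: mt_leaves_def)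
  ultimately have "x = (fst x, mt_h T (fst x))" by metis
  then show "x \<in> (\<lambda>v. (v, mt_h T v)) ` mt_V T" using pt_V[OF m xp] by (metis image_eqI)
qed

lemma anc_ex1: assumes m: "merge_tree T" and x: "x \<in> mt_points T"
  and s: "snd x \<le> s" "s \<le> mt_h T (mt_root T)"
  shows "\<exists>!y. mt_anc T x y \<and> snd y = s"
  using anc_exists[OF assms] anc_unique[OF m] by blast

lemma subdiv_pts: "merge_tree G \<Longrightarrow> subdiv_nodes_g F G e \<subseteq> mt_points G"
  using node_pt by (auto simp: subdiv_nodes_g_def mt_node_points_def)

lemma img_char:
  assumes mF: "merge_tree F" and mG: "merge_tree G"
    and r: "mt_h G (mt_root G) = mt_h F (mt_root F) + \<epsilon>"
    and ph: "\<forall>u \<in> mt_leaves F. \<phi> u \<in> subdiv_nodes_g F G \<epsilon> \<and> snd (\<phi> u) = snd u + \<epsilon>"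
  shows "image_phi F G \<epsilon> \<phi> = {y. \<exists>u \<in> mt_leaves F. mt_anc G (\<phi> u) y}"
proof (intro set_eqI iffI)
  fix y assume "y \<in> image_phi F G \<epsilon> \<phi>"
  then obtain u x where u: "u \<in> mt_leaves F" and x: "mt_anc F u x" and y: "y = path_ext G \<epsilon> \<phi> u x"
    by (auto simp: image_phi_def)
  have pu: "\<phi> u \<in> mt_points G" using ph u subdiv_pts[OF mG] by blast
  have xp: "x \<in> mt_points F" using x by (auto simp: mt_anc_def)
  have "\<exists>!y. mt_anc G (\<phi> u) y \<and> snd y = snd x + \<epsilon>"
    apply (rule anc_ex1[OF mG pu])
    using ph u x pt_root[OF mF xp] r by (auto simp: mt_anc_def)
  then have "mt_anc G (\<phi> u) (THE y. mt_anc G (\<phi> u) y \<and> snd y = snd x + \<epsilon>)"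
    by (rule theI'[THEN conjunct1])
  then have "mt_anc G (\<phi> u) y" unfolding y path_ext_def .
  then show "y \<in> {y. \<exists>u \<in> mt_leaves F. mt_anc G (\<phi> u) y}" using u by blast
next
  fix y assume "y \<in> {y. \<exists>u \<in> mt_leaves F. mt_anc G (\<phi> u) y}"
  then obtain u where u: "u \<in> mt_leaves F" and y: "mt_anc G (\<phi> u) y" by blast
  have pu: "\<phi> u \<in> mt_points G" using ph u subdiv_pts[OF mG] by blast
  have up: "u \<in> mt_points F" using u by (auto simp: mt_leaves_def)
  have yp: "y \<in> mt_points G" using y by (auto simp: mt_anc_def)
  obtain x where x: "mt_anc F u x" "snd x = snd y - \<epsilon>"
    using anc_exists[OF mF up, of "snd y - \<epsilon>"] ph u y pt_root[OF mG yp] r by (auto simp: mt_anc_def)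
  have "\<exists>!y'. mt_anc G (\<phi> u) y' \<and> snd y' = snd x + \<epsilon>"
    apply (rule anc_ex1[OF mG pu])
    using ph u y x pt_root[OF mG yp] r by (auto simp: mt_anc_def)
  then have "path_ext G \<epsilon> \<phi> u x = y" unfolding path_ext_def
    by (rule the1_equality) (use y x in auto)
  then show "y \<in> image_phi F G \<epsilon> \<phi>" unfolding image_phi_def using u x by blast
qed

lemma anc_root: "merge_tree T \<Longrightarrow> z \<in> mt_points T \<Longrightarrow> mt_anc T z (mt_root T, mt_h T (mt_root T))"
  using pt_V[of T z] pt_root[of T z] root_pt[of T]
  by (auto simp: mt_anc_def merge_tree_def)

theorem lemma4p9:
  fixes F :: "'v mtree" and G :: "'w mtree" and \<epsilon> :: real
    and \<phi> :: "'v \<times> real \<Rightarrow> 'w \<times> real"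
  assumes "\<epsilon> > 0"
    and "merge_tree F" and "merge_tree G"
    and "mt_h G (mt_root G) = mt_h F (mt_root F) + \<epsilon>"
    and "\<forall>u \<in> mt_leaves F. \<phi> u \<in> subdiv_nodes_g F G \<epsilon> \<and> snd (\<phi> u) = snd u + \<epsilon>"
    and "\<forall>u1 \<in> mt_leaves F. \<forall>u2 \<in> mt_leaves F. u1 \<noteq> u2 \<longrightarrow>
           path_ext G \<epsilon> \<phi> u1 (mt_lca F u1 u2) = path_ext G \<epsilon> \<phi> u2 (mt_lca F u1 u2)"
    and "\<forall>w \<in> mt_leaves G. w \<notin> image_phi F G \<epsilon> \<phi> \<longrightarrow>
           \<bar>snd (nearest_anc G (image_phi F G \<epsilon> \<phi>) w) - snd w\<bar> \<le> 2 * \<epsilon>"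
  shows "\<forall>x \<in> mt_points G - image_phi F G \<epsilon> \<phi>.
           \<bar>snd (nearest_anc G (image_phi F G \<epsilon> \<phi>) x) - snd x\<bar> \<le> 2 * \<epsilon>"
proof
  note mF = assms(2) and mG = assms(3) and ph = assms(5) and hyp = assms(7)
  define S where "S = image_phi F G \<epsilon> \<phi>"
  have Sc: "S = {y. \<exists>u \<in> mt_leaves F. mt_anc G (\<phi> u) y}"
    unfolding S_def using img_char[OF mF mG assms(4) ph] .
  have Sup: "z \<in> S" if "y \<in> S" "mt_anc G y z" for y z
    using that anc_trans unfolding Sc by blast
  have pu: "\<phi> u \<in> mt_points G" if "u \<in> mt_leaves F" for u
    using ph that subdiv_pts[OF mG] by blast
  have rF: "mt_root F \<in> mt_V F" and rGV: "mt_root G \<in> mt_V G" using mF mG by (auto simp: merge_tree_def)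
  obtain u0 where u0: "u0 \<in> mt_leaves F" using leaf_below[OF mF root_pt[OF rF]] by blast
  define rG where "rG = (mt_root G, mt_h G (mt_root G))"
  have rS: "rG \<in> S" unfolding Sc rG_def using anc_root[OF mG pu[OF u0]] u0 by blast
  define P where "P w a \<longleftrightarrow> a \<in> S \<and> mt_anc G w a \<and> (\<forall>z\<in>S. mt_anc G w z \<longrightarrow> mt_anc G a z)" for w a
  have Puniq: "a = b" if "P w a" "P w b" for w a b
    using that anc_antisym[OF mG] unfolding P_def by blast
  have finL: "finite (mt_leaves F)"
    using leaves_sub[OF mF] mF finite_surj by (auto simp: merge_tree_def)
  have near: "\<exists>a. P w a" if wp: "w \<in> mt_points G" for w
  proof -
    define C where "C = mt_V G \<times> (mt_h G ` mt_V G \<union> snd ` \<phi> ` mt_leaves F \<union> {snd w})"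
    have finC: "finite C" unfolding C_def using mG finL by (auto simp: merge_tree_def)
    define D where "D = C \<inter> S \<inter> {y. mt_anc G w y}"
    have finD: "finite D" using finC unfolding D_def by auto
    have claim: "\<exists>c\<in>D. snd c \<le> snd y" if yS: "y \<in> S" and wy: "mt_anc G w y" for y
    proof -
      obtain u where u: "u \<in> mt_leaves F" and uy: "mt_anc G (\<phi> u) y" using yS unfolding Sc by blast
      have yp: "y \<in> mt_points G" using wy by (auto simp: mt_anc_def)
      define t' where "t' = max (mt_h G (fst y)) (max (snd (\<phi> u)) (snd w))"
      define c where "c = (fst y, t')"
      have tle: "t' \<le> snd y" using pt_hle[OF yp] uy wy unfolding t'_def by (auto simp: mt_anc_def)
      have tge: "mt_h G (fst y) \<le> t'" unfolding t'_def by auto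
      have cp: "c \<in> mt_points G"
        using pt_cases[OF yp]
      proof
        assume "fst y \<in> mt_V G - {mt_root G} \<and> mt_h G (fst y) \<le> snd y \<and> snd y < mt_h G (mt_par G (fst y))"
        then show ?thesis using tle tge unfolding c_def mt_points_def by auto
      next
        assume "y = (mt_root G, mt_h G (mt_root G))"
        then have "c = y" using tle tge unfolding c_def by auto
        then show ?thesis using yp by simp
      qed
      have t1: "snd (\<phi> u) \<le> t'" "snd w \<le> t'" unfolding t'_def by auto
      have a1: "mt_anc G (\<phi> u) c" using uy cp t1 unfolding mt_anc_def c_def by simp
      have a2: "mt_anc G w c" using wy cp t1 unfolding mt_anc_def c_def by simp
      have cS: "c \<in> S" using a1 u unfolding Sc by blast
      have t3: "t' = mt_h G (fst y) \<or> t' = snd (\<phi> u) \<or> t' = snd w" unfolding t'_def max_def by auto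
      have "t' \<in> mt_h G ` mt_V G \<union> snd ` \<phi> ` mt_leaves F \<union> {snd w}"
        using t3 pt_V[OF mG yp] u by blast
      then have cC: "c \<in> C" unfolding C_def c_def using pt_V[OF mG yp] by blast
      have "c \<in> D" using cC cS a2 unfolding D_def by auto
      then show ?thesis using tle unfolding c_def by (intro bexI[where x = "(fst y, t')"]) simp_all
    qed
    have "rG \<in> S" "mt_anc G w rG" using rS anc_root[OF mG wp] unfolding rG_def by auto
    then obtain c0 where "c0 \<in> D" using claim by blast
    then have "Min (snd ` D) \<in> snd ` D" using finD Min_in by blast
    then obtain c where cD: "c \<in> D" and cmin: "snd c = Min (snd ` D)" by auto
    have "P w c" unfolding P_def
    proof (intro conjI ballI impI)
      show "c \<in> S" "mt_anc G w c" using cD unfolding D_def by auto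
      fix z assume "z \<in> S" "mt_anc G w z"
      then obtain c' where "c' \<in> D" "snd c' \<le> snd z" using claim by blast
      then have "snd c \<le> snd z"
        using Min_le[OF finite_imageI[OF finD] imageI[OF \<open>c' \<in> D\<close>, of snd]] cmin by linarith
      then show "mt_anc G c z" using anc_chain[OF mG \<open>mt_anc G w c\<close> \<open>mt_anc G w z\<close>] by simp
    qed
    then show ?thesis by blast
  qed
  have nearest_eq: "nearest_anc G S w = a" if "P w a" for w a
  proof -
    have "nearest_anc G S w = (THE a. P w a)" unfolding nearest_anc_def P_def by simp
    also have "\<dots> = a" using that Puniq by (intro the_equality) auto
    finally show ?thesis .
  qed
  fix x assume x: "x \<in> mt_points G - image_phi F G \<epsilon> \<phi>"
  then have xp: "x \<in> mt_points G" and xS: "x \<notin> S" unfolding S_def by auto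
  obtain w where wL: "w \<in> mt_leaves G" and wx: "mt_anc G w x" using leaf_below[OF mG xp] by blast
  have wp: "w \<in> mt_points G" using wx by (auto simp: mt_anc_def)
  have wS: "w \<notin> S" using Sup wx xS by blast
  obtain a where Pa: "P w a" using near[OF wp] by blast
  have na: "nearest_anc G S w = a" using nearest_eq[OF Pa] .
  have aS: "a \<in> S" and wa: "mt_anc G w a" using Pa unfolding P_def by auto
  have xa_le: "snd x \<le> snd a"
  proof (rule ccontr)
    assume "\<not> snd x \<le> snd a"
    then have "mt_anc G a x" using anc_chain[OF mG wa wx] by simp
    then show False using Sup aS xS by blast
  qed
  have xa: "mt_anc G x a" using anc_chain[OF mG wx wa xa_le] .
  have "P x a" unfolding P_def using aS xa Pa anc_trans[OF wx] unfolding P_def by blast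
  then have nx: "nearest_anc G S x = a" by (rule nearest_eq)
  have "\<bar>snd a - snd w\<bar> \<le> 2 * \<epsilon>" using hyp wL wS na unfolding S_def by auto
  moreover have "snd w \<le> snd x" using wx by (auto simp: mt_anc_def)
  ultimately show "\<bar>snd (nearest_anc G (image_phi F G \<epsilon> \<phi>) x) - snd x\<bar> \<le> 2 * \<epsilon>"
    using nx xa_le unfolding S_def by auto
qed

end
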